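(* Let $X$ be a set and $\{d_r\colon X\times X\to\mathbb{R}_{\ge0}\cup\{\infty\}\}_{r>0}$ a family satisfying the weaker $\{d_r\}$-axioms (see context). Then there exists a quasi-pseudo-metric $d$ on $X$ such that the quasi-uniformity induced by $d$ equals the quasi-uniformity $\mathcal U$ induced by $\{d_r\}_{r>0}$. Moreover, if $\{d_r\}_{r>0}$ is non-degenerate, i.e. $d_r(x,y)=0$ for all $r>0$ implies $x=y$, then $d$ can be chosen to be a quasi-metric.
   Context: The weaker $\{d_r\}$-axioms, required for all $x,y,z\in X$: (Self-distance) $d_r(x,x)=0$ for all $r>0$. (Upper semi-continuity) if $r_1\le r_2$ then $d_{r_1}(x,y)\le d_{r_2}(x,y)$; and if $d_r(x,y)<\varepsilon$ there is $\delta>0$ with $d_{r+\delta}(x,y)<\varepsilon$. (Weaker triangle inequality) for $r_1,r_2,r_3>0$, if $d_{r_1+r_2+r_3}(x,y)<r_3$ and $d_{r_1+r_2+r_3}(y,z)<r_2$, then $d_{r_1}(x,z)\le d_{r_1+r_2+r_3}(x,y)+d_{r_1+r_2+r_3}(y,z)$. The quasi-uniformity $\mathcal U$ induced by $\{d_r\}$ consists of all $U\subset X\times X$ containing $\{(x,y)\mid d_r(x,y)<\varepsilon\}$ for some $r,\varepsilon>0$. A quasi-pseudo-metric is a function $d\colon X\times X\to\mathbb{R}_{\ge0}$ with $d(x,x)=0$ and $d(x,z)\le d(x,y)+d(y,z)$ for all $x,y,z$ (not necessarily symmetric); it is a quasi-metric if moreover $d(x,y)=0$ implies $x=y$. The quasi-uniformity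 induced by $d$ consists of all $U\subset X\times X$ containing $\{(x,y)\mid d(x,y)<\varepsilon\}$ for some $\varepsilon>0$. *)

theory Defs
  imports "HOL-Analysis.Analysis"
begin

definition weaker_dr_axioms :: "'a set \<Rightarrow> (real \<Rightarrow> 'a \<Rightarrow> 'a \<Rightarrow> ennreal) \<Rightarrow> bool" where
  "weaker_dr_axioms X D \<longleftrightarrow>
     (\<forall>x\<in>X. \<forall>r>0. D r x x = 0) \<and>
     (\<forall>x\<in>X. \<forall>y\<in>X. \<forall>r1 r2. 0 < r1 \<and> r1 \<le> r2 \<longrightarrow> D r1 x y \<le> D r2 x y) \<and>
     (\<forall>x\<in>X. \<forall>y\<in>X. \<forall>r>0. \<forall>\<epsilon>::real. D r x y < ennreal \<epsilon> \<longrightarrow>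
         (\<exists>\<delta>>0. D (r + \<delta>) x y < ennreal \<epsilon>)) \<and>
     (\<forall>x\<in>X. \<forall>y\<in>X. \<forall>z\<in>X. \<forall>r1>0. \<forall>r2>0. \<forall>r3>0.
         D (r1 + r2 + r3) x y < ennreal r3 \<and> D (r1 + r2 + r3) y z < ennreal r2 \<longrightarrow>
         D r1 x z \<le> D (r1 + r2 + r3) x y + D (r1 + r2 + r3) y z)"

definition dr_nondegenerate :: "'a set \<Rightarrow> (real \<Rightarrow> 'a \<Rightarrow> 'a \<Rightarrow> ennreal) \<Rightarrow> bool" where
  "dr_nondegenerate X D \<longleftrightarrow> (\<forall>x\<in>X. \<forall>y\<in>X. (\<forall>r>0. D r x y = 0) \<longrightarrow> x = y)"

definition quasi_uniformity_dr :: "'a set \<Rightarrow> (real \<Rightarrow> 'a \<Rightarrow> 'a \<Rightarrow> ennreal) \<Rightarrow> ('a \<times> 'a) set set" where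
  "quasi_uniformity_dr X D = {U. U \<subseteq> X \<times> X \<and>
     (\<exists>r>0. \<exists>\<epsilon>>0. {(x, y) \<in> X \<times> X. D r x y < ennreal \<epsilon>} \<subseteq> U)}"

definition quasi_pseudo_metric :: "'a set \<Rightarrow> ('a \<Rightarrow> 'a \<Rightarrow> real) \<Rightarrow> bool" where
  "quasi_pseudo_metric X d \<longleftrightarrow>
     (\<forall>x\<in>X. \<forall>y\<in>X. 0 \<le> d x y) \<and> (\<forall>x\<in>X. d x x = 0) \<and>
     (\<forall>x\<in>X. \<forall>y\<in>X. \<forall>z\<in>X. d x z \<le> d x y + d y z)"

definition quasi_metric :: "'a set \<Rightarrow> ('a \<Rightarrow> 'a \<Rightarrow> real) \<Rightarrow> bool" where
  "quasi_metric X d \<longleftrightarrow> quasi_pseudo_metric X d \<and> (\<forall>x\<in>X. \<forall>y\<in>X. d x y = 0 \<longrightarrow> x = y)"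

definition quasi_uniformity_d :: "'a set \<Rightarrow> ('a \<Rightarrow> 'a \<Rightarrow> real) \<Rightarrow> ('a \<times> 'a) set set" where
  "quasi_uniformity_d X d = {U. U \<subseteq> X \<times> X \<and>
     (\<exists>\<epsilon>>0. {(x, y) \<in> X \<times> X. d x y < \<epsilon>} \<subseteq> U)}"

end

theory Submission
  imports Defs
begin

lemma ennreal_add_lt:
  fixes a b :: ennreal
  assumes "a < ennreal s" "b < ennreal t" "0 \<le> s" "0 \<le> t"
  shows "a + b < ennreal (s + t)"
proof -
  obtain a' where a': "a = ennreal a'" "0 \<le> a'" using assms(1)
    by (cases a rule: ennreal_cases) auto
  obtain b' where b': "b = ennreal b'" "0 \<le> b'" using assms(2)
    by (cases b rule: ennreal_cases) auto
  have "a' < s" using assms(1) a' by (simp add: ennreal_less_iff)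
  moreover have "b' < t" using assms(2) b' by (simp add: ennreal_less_iff)
  ultimately show ?thesis using a' b' assms by (simp add: ennreal_plus[symmetric] ennreal_less_iff del: ennreal_plus)
qed

lemma real_pow_zero:
  fixes F :: real
  assumes "\<And>n. F \<le> (1/2)^n"
  shows "F \<le> 0"
proof (rule ccontr)
  assume "\<not> F \<le> 0"
  then obtain n where "(1/2::real)^n < F" using real_arch_pow_inv[of F "1/2"] by auto
  with assms[of n] show False by simp
qed

lemma real_pow_bound:
  fixes F a :: real
  assumes "F \<le> 1" "0 \<le> a" "\<And>k. a < (1/2)^k \<Longrightarrow> F \<le> (1/2)^k"
  shows "F \<le> 2 * a"
proof (cases "a = 0")
  case True
  then have "F \<le> 0" using real_pow_zero[of F] assms(3) by simp
  then show ?thesis using True by simp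
next
  case False
  show ?thesis
  proof (cases "a < 1")
    case False then show ?thesis using assms(1) by simp
  next
    case True
    have ap: "0 < a" using False assms(2) by simp
    obtain n where "(1/2::real)^n < a" using real_arch_pow_inv[of a "1/2"] ap by auto
    then have "(1/2::real)^n \<le> a" by simp
    from ex_least_nat_le[of "\<lambda>m. (1/2::real)^m \<le> a", OF this] True
    obtain k where k: "(\<forall>i<k. \<not> (1/2::real)^i \<le> a)" "(1/2::real)^k \<le> a" by auto
    have "k \<noteq> 0"
    proof
      assume "k = 0" with k(2) True show False by simp
    qed
    then obtain j where j: "k = Suc j" by (cases k) auto
    have "a < (1/2)^j" using k(1) j by auto
    then have "F \<le> (1/2)^j" using assms(3) by simp
    also have "\<dots> = 2 * (1/2)^k" using j by simp
    also have "\<dots> \<le> 2 * a" using k(2) by simp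
    finally show ?thesis .
  qed
qed


definition VV :: "'a set \<Rightarrow> (real \<Rightarrow> 'a \<Rightarrow> 'a \<Rightarrow> ennreal) \<Rightarrow> nat \<Rightarrow> ('a \<times> 'a) set" where
  "VV X D n = (if n = 0 then UNIV else
     {(x, y). x \<in> X \<and> y \<in> X \<and> D (real n) x y < ennreal ((1/3)^n)})"

definition ff :: "'a set \<Rightarrow> (real \<Rightarrow> 'a \<Rightarrow> 'a \<Rightarrow> ennreal) \<Rightarrow> 'a \<Rightarrow> 'a \<Rightarrow> real" where
  "ff X D x y = Inf {(1/2::real)^n | n. (x, y) \<in> VV X D n}"

definition cost :: "'a set \<Rightarrow> (real \<Rightarrow> 'a \<Rightarrow> 'a \<Rightarrow> ennreal) \<Rightarrow> (nat \<Rightarrow> 'a) \<Rightarrow> nat \<Rightarrow> nat \<Rightarrow> real" where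
  "cost X D p i j = (\<Sum>k\<in>{i..<j}. ff X D (p k) (p (Suc k)))"

definition dd :: "'a set \<Rightarrow> (real \<Rightarrow> 'a \<Rightarrow> 'a \<Rightarrow> ennreal) \<Rightarrow> 'a \<Rightarrow> 'a \<Rightarrow> real" where
  "dd X D x y = Inf {cost X D p 0 n | p n. p 0 = x \<and> p n = y \<and> (\<forall>k\<le>n. p k \<in> X)}"

context
  fixes X :: "'a set" and D :: "real \<Rightarrow> 'a \<Rightarrow> 'a \<Rightarrow> ennreal"
  assumes ax: "weaker_dr_axioms X D"
begin

lemma ax_diag: "x \<in> X \<Longrightarrow> 0 < r \<Longrightarrow> D r x x = 0"
  using ax unfolding weaker_dr_axioms_def by blast

lemma ax_mono: "x \<in> X \<Longrightarrow> y \<in> X \<Longrightarrow> 0 < r1 \<Longrightarrow> r1 \<le> r2 \<Longrightarrow> D r1 x y \<le> D r2 x y"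
  using ax unfolding weaker_dr_axioms_def by blast

lemma ax_tri: "x \<in> X \<Longrightarrow> y \<in> X \<Longrightarrow> z \<in> X \<Longrightarrow> 0 < r1 \<Longrightarrow> 0 < r2 \<Longrightarrow> 0 < r3 \<Longrightarrow>
   D (r1 + r2 + r3) x y < ennreal r3 \<Longrightarrow> D (r1 + r2 + r3) y z < ennreal r2 \<Longrightarrow>
   D r1 x z \<le> D (r1 + r2 + r3) x y + D (r1 + r2 + r3) y z"
  using ax unfolding weaker_dr_axioms_def by blast

lemma V_Suc: "VV X D (Suc n) \<subseteq> VV X D n"
proof (cases "n = 0")
  case True then show ?thesis by (simp add: VV_def)
next
  case False
  show ?thesis
  proof
    fix xy assume "xy \<in> VV X D (Suc n)"
    then obtain x y where xy: "xy = (x, y)" "x \<in> X" "y \<in> X"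
      "D (real (Suc n)) x y < ennreal ((1/3)^Suc n)" by (auto simp: VV_def)
    have "D (real n) x y \<le> D (real (Suc n)) x y"
      using ax_mono[OF xy(2,3), of "real n" "real (Suc n)"] False by simp
    also have "\<dots> < ennreal ((1/3)^Suc n)" by (rule xy(4))
    also have "\<dots> \<le> ennreal ((1/3)^n)" by (rule ennreal_leI) simp
    finally show "xy \<in> VV X D n" using xy False by (simp add: VV_def)
  qed
qed

lemma V_mono: "m \<le> n \<Longrightarrow> VV X D n \<subseteq> VV X D m"
proof -
  have "decseq (VV X D)" by (rule decseq_SucI) (rule V_Suc)
  then show "m \<le> n \<Longrightarrow> VV X D n \<subseteq> VV X D m" by (rule decseqD)
qed

lemma V_diag: "x \<in> X \<Longrightarrow> (x, x) \<in> VV X D n"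
  by (auto simp: VV_def ax_diag)

lemma V_comp3:
  assumes X: "x \<in> X" "y \<in> X" "z \<in> X" "w \<in> X"
    and h: "(x, y) \<in> VV X D (Suc k)" "(y, z) \<in> VV X D (Suc k)" "(z, w) \<in> VV X D (Suc k)"
  shows "(x, w) \<in> VV X D k"
proof (cases "k = 0")
  case True then show ?thesis by (simp add: VV_def)
next
  case False
  define e :: real where "e = (1/3)^Suc k"
  have ep: "0 < e" by (simp add: e_def)
  have e9: "e \<le> 1/9"
  proof -
    have "(1/3::real)^Suc k \<le> (1/3)^2" using False by (intro power_decreasing) auto
    then show ?thesis by (simp add: e_def power2_eq_square)
  qed
  have hk: "1 \<le> real k" using False by simp
  have d1: "D (real (Suc k)) x y < ennreal e" "D (real (Suc k)) y z < ennreal e"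
    "D (real (Suc k)) z w < ennreal e" using h by (auto simp: VV_def e_def)
  define R where "R = real (Suc k) - 2 * e"
  have Rp: "0 < R - 3 * e" using e9 hk by (simp add: R_def)
  have "D R x z \<le> D (R + e + e) x y + D (R + e + e) y z"
    using ax_tri[OF X(1,2,3), of R e e] d1 ep Rp by (simp add: R_def)
  also have "\<dots> < ennreal (e + e)"
    using d1 ep by (intro ennreal_add_lt) (auto simp: R_def)
  finally have xz: "D R x z < ennreal (2 * e)" by simp
  have zw: "D R z w < ennreal e"
  proof -
    have "D R z w \<le> D (real (Suc k)) z w"
      using ax_mono[OF X(3,4), of R "real (Suc k)"] Rp ep by (simp add: R_def)
    then show ?thesis using d1(3) by simp
  qed
  have "D (R - 3 * e) x w \<le> D ((R - 3 * e) + e + 2 * e) x z + D ((R - 3 * e) + e + 2 * e) z w"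
    using ax_tri[OF X(1,3,4), of "R - 3 * e" e "2 * e"] xz zw ep Rp by simp
  also have "\<dots> < ennreal (2 * e + e)"
    using xz zw ep by (intro ennreal_add_lt) auto
  finally have xw: "D (R - 3 * e) x w < ennreal (3 * e)" by simp
  have "D (real k) x w \<le> D (R - 3 * e) x w"
    using ax_mono[OF X(1,4), of "real k" "R - 3 * e"] hk e9 by (simp add: R_def)
  also note xw
  also have "3 * e = (1/3)^k" by (simp add: e_def)
  finally show ?thesis using X False by (simp add: VV_def)
qed


lemma ff_set: "{(1/2::real)^n | n. (x, y) \<in> VV X D n} \<noteq> {}"
  "bdd_below {(1/2::real)^n | n. (x, y) \<in> VV X D n}"
proof -
  have "(x, y) \<in> VV X D 0" by (simp add: VV_def)
  then show "{(1/2::real)^n | n. (x, y) \<in> VV X D n} \<noteq> {}" by blast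
  show "bdd_below {(1/2::real)^n | n. (x, y) \<in> VV X D n}"
    by (rule bdd_belowI[of _ 0]) auto
qed

lemma ff_le: assumes "(x, y) \<in> VV X D n" shows "ff X D x y \<le> (1/2)^n"
proof -
  have "(1/2::real)^n \<in> {(1/2::real)^n | n. (x, y) \<in> VV X D n}" using assms by blast
  then show ?thesis unfolding ff_def by (rule cInf_lower) (rule ff_set)
qed

lemma ff_nonneg: "0 \<le> ff X D x y"
  unfolding ff_def by (rule cInf_greatest[OF ff_set(1)]) auto

lemma ff_le1: "ff X D x y \<le> 1"
  using ff_le[of x y 0] by (simp add: VV_def)

lemma ff_lt: assumes "ff X D x y < (1/2)^k" shows "(x, y) \<in> VV X D (Suc k)"
proof -
  from assms obtain n where n: "(x, y) \<in> VV X D n" "(1/2::real)^n < (1/2)^k"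
    unfolding ff_def cInf_less_iff[OF ff_set] by auto
  then have "k < n" by (simp add: power_strict_decreasing_iff)
  then show ?thesis using n(1) V_mono[of "Suc k" n] by auto
qed

lemma ff_diag: "x \<in> X \<Longrightarrow> ff X D x x = 0"
  using real_pow_zero[of "ff X D x x"] ff_le[OF V_diag] ff_nonneg[of x x] by force

lemma ff_three:
  assumes X: "u \<in> X" "v \<in> X" "w \<in> X" "z \<in> X"
    and h: "ff X D u v \<le> a" "ff X D v w \<le> a" "ff X D w z \<le> a"
  shows "ff X D u z \<le> 2 * a"
proof (rule real_pow_bound)
  show "ff X D u z \<le> 1" by (rule ff_le1)
  show "0 \<le> a" using h(1) ff_nonneg[of u v] by simp
  fix k assume "a < (1/2::real)^k"
  then have "(u, v) \<in> VV X D (Suc k)" "(v, w) \<in> VV X D (Suc k)" "(w, z) \<in> VV X D (Suc k)"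
    using h by (auto intro!: ff_lt)
  then have "(u, z) \<in> VV X D k" using V_comp3[OF X] by blast
  then show "ff X D u z \<le> (1/2)^k" by (rule ff_le)
qed

lemma cost_nonneg: "0 \<le> cost X D p i j"
  unfolding cost_def by (intro sum_nonneg) (simp add: ff_nonneg)

lemma cost_split: "i \<le> l \<Longrightarrow> l \<le> j \<Longrightarrow> cost X D p i j = cost X D p i l + cost X D p l j"
  unfolding cost_def by (simp add: sum.atLeastLessThan_concat)

lemma cost_one: "cost X D p l (Suc l) = ff X D (p l) (p (Suc l))"
  unfolding cost_def by simp

lemma chain_bound:
  "i \<le> j \<Longrightarrow> (\<forall>k\<in>{i..j}. p k \<in> X) \<Longrightarrow> ff X D (p i) (p j) \<le> 2 * cost X D p i j"
proof (induction "j - i" arbitrary: i j rule: less_induct)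
  case less
  show ?case
  proof (cases "i = j")
    case True
    then show ?thesis using less.prems ff_diag[of "p i"] by (simp add: cost_def)
  next
    case False
    then have ij: "i < j" using less.prems by simp
    define a where "a = cost X D p i j"
    have a0: "0 \<le> a" unfolding a_def by (rule cost_nonneg)
    define S where "S = {l. i \<le> l \<and> l < j \<and> cost X D p i l \<le> a / 2}"
    have iS: "i \<in> S" using ij a0 by (simp add: S_def cost_def)
    have fS: "finite S" unfolding S_def by (rule finite_subset[of _ "{i..<j}"]) auto
    define l where "l = Max S"
    have lS: "l \<in> S" unfolding l_def using fS iS by (intro Max_in) auto
    have lmax: "\<And>m. m \<in> S \<Longrightarrow> m \<le> l" unfolding l_def using fS by auto
    have il: "i \<le> l" "l < j" "cost X D p i l \<le> a / 2" using lS by (auto simp: S_def)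
    have dec: "a = cost X D p i l + ff X D (p l) (p (Suc l)) + cost X D p (Suc l) j"
      using cost_split[of i l j p] cost_split[of l "Suc l" j p] il cost_one[of p l]
      by (simp add: a_def)
    have rest: "cost X D p (Suc l) j \<le> a / 2"
    proof (cases "Suc l = j")
      case True then show ?thesis using a0 by (simp add: cost_def)
    next
      case False
      then have "Suc l \<notin> S" using lmax by fastforce
      then have "cost X D p i (Suc l) > a / 2" using il False by (auto simp: S_def)
      moreover have "cost X D p i (Suc l) = cost X D p i l + ff X D (p l) (p (Suc l))"
        using cost_split[of i l "Suc l" p] il cost_one[of p l] by simp
      ultimately show ?thesis using dec by simp
    qed
    have mid: "ff X D (p l) (p (Suc l)) \<le> a"
      using dec cost_nonneg[of p i l] cost_nonneg[of p "Suc l" j] by simp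
    have h1: "ff X D (p i) (p l) \<le> 2 * cost X D p i l"
      using less.hyps[of l i] il less.prems by auto
    have h2: "ff X D (p (Suc l)) (p j) \<le> 2 * cost X D p (Suc l) j"
      using less.hyps[of j "Suc l"] il less.prems by auto
    have Xs: "p i \<in> X" "p l \<in> X" "p (Suc l) \<in> X" "p j \<in> X" using less.prems il by auto
    have "ff X D (p i) (p j) \<le> 2 * a"
      by (rule ff_three[OF Xs]) (use h1 h2 il rest mid in auto)
    then show ?thesis by (simp add: a_def)
  qed
qed


definition chains where
  "chains x y = {cost X D p 0 n | p n. p 0 = x \<and> p n = y \<and> (\<forall>k\<le>n. p k \<in> X)}"

lemma dd_eq: "dd X D x y = Inf (chains x y)"
  by (simp add: dd_def chains_def)

lemma two_chain: assumes "x \<in> X" "y \<in> X" shows "ff X D x y \<in> chains x y"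
proof -
  define p where "p = (\<lambda>k::nat. if k = 0 then x else y)"
  have h1: "ff X D x y = cost X D p 0 1" by (simp add: cost_def p_def)
  have h2: "p 0 = x" "p 1 = y" "\<forall>k\<le>1. p k \<in> X" using assms by (auto simp: p_def)
  have "\<exists>p' n. ff X D x y = cost X D p' 0 n \<and> p' 0 = x \<and> p' n = y \<and> (\<forall>k\<le>n. p' k \<in> X)"
    by (rule exI[of _ p], rule exI[of _ "1::nat"]) (intro conjI h1 h2)
  then show ?thesis unfolding chains_def mem_Collect_eq .
qed

lemma chains_ne: "x \<in> X \<Longrightarrow> y \<in> X \<Longrightarrow> chains x y \<noteq> {}"
  using two_chain by blast

lemma chains_bdd: "bdd_below (chains x y)"
  by (rule bdd_belowI[of _ 0]) (auto simp: chains_def cost_nonneg)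

lemma dd_le_ff: "x \<in> X \<Longrightarrow> y \<in> X \<Longrightarrow> dd X D x y \<le> ff X D x y"
  unfolding dd_eq by (rule cInf_lower[OF two_chain chains_bdd])

lemma ff_le_dd: assumes "x \<in> X" "y \<in> X" shows "ff X D x y \<le> 2 * dd X D x y"
proof -
  have "ff X D x y / 2 \<le> Inf (chains x y)"
  proof (rule cInf_greatest[OF chains_ne[OF assms]])
    fix c assume "c \<in> chains x y"
    then obtain p n where "c = cost X D p 0 n" "p 0 = x" "p n = y" "\<forall>k\<le>n. p k \<in> X"
      unfolding chains_def by blast
    then show "ff X D x y / 2 \<le> c" using chain_bound[of 0 n p] by simp
  qed
  then show ?thesis unfolding dd_eq by simp
qed

lemma dd_nonneg: "x \<in> X \<Longrightarrow> y \<in> X \<Longrightarrow> 0 \<le> dd X D x y"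
  using ff_le_dd[of x y] ff_nonneg[of x y] by linarith

lemma dd_diag: "x \<in> X \<Longrightarrow> dd X D x x = 0"
  using dd_le_ff[of x x] dd_nonneg[of x x] ff_diag[of x] by simp

lemma dd_tri: assumes "x \<in> X" "y \<in> X" "z \<in> X" shows "dd X D x z \<le> dd X D x y + dd X D y z"
proof (rule field_le_epsilon)
  fix e :: real assume e: "0 < e"
  have "Inf (chains x y) < dd X D x y + e / 2" using e by (simp add: dd_eq)
  then obtain c1 where "c1 \<in> chains x y" "c1 < dd X D x y + e / 2"
    using cInf_lessD[OF chains_ne[OF assms(1,2)]] by blast
  then obtain p n where p: "c1 = cost X D p 0 n" "p 0 = x" "p n = y" "\<forall>k\<le>n. p k \<in> X"
    and c1: "c1 < dd X D x y + e / 2" unfolding chains_def by blast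
  have "Inf (chains y z) < dd X D y z + e / 2" using e by (simp add: dd_eq)
  then obtain c2 where "c2 \<in> chains y z" "c2 < dd X D y z + e / 2"
    using cInf_lessD[OF chains_ne[OF assms(2,3)]] by blast
  then obtain q m where q: "c2 = cost X D q 0 m" "q 0 = y" "q m = z" "\<forall>k\<le>m. q k \<in> X"
    and c2: "c2 < dd X D y z + e / 2" unfolding chains_def by blast
  define r where "r = (\<lambda>k. if k \<le> n then p k else q (k - n))"
  have r1: "cost X D r 0 n = cost X D p 0 n"
    unfolding cost_def by (rule sum.cong) (auto simp: r_def)
  have r2: "cost X D r n (n + m) = cost X D q 0 m"
  proof -
    have "cost X D r n (n + m) = (\<Sum>k\<in>{0 + n..<m + n}. ff X D (r k) (r (Suc k)))"
      by (simp add: cost_def add.commute)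
    also have "\<dots> = (\<Sum>k\<in>{0..<m}. ff X D (r (k + n)) (r (Suc (k + n))))"
      by (rule sum.shift_bounds_nat_ivl)
    also have "\<dots> = cost X D q 0 m"
      unfolding cost_def by (rule sum.cong) (auto simp: r_def p(3) q(2) Suc_diff_le)
    finally show ?thesis .
  qed
  have rc: "r 0 = x \<and> r (n + m) = z \<and> (\<forall>k\<le>n + m. r k \<in> X)"
    using p q by (auto simp: r_def)
  have "cost X D r 0 (n + m) \<in> chains x z"
    unfolding chains_def using rc by blast
  then have "dd X D x z \<le> cost X D r 0 (n + m)"
    unfolding dd_eq by (rule cInf_lower[OF _ chains_bdd])
  also have "\<dots> = c1 + c2" using cost_split[of 0 n "n + m" r] r1 r2 p(1) q(1) by simp
  finally show "dd X D x z \<le> dd X D x y + dd X D y z + e" using c1 c2 by simp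
qed

lemma dd_qpm: "quasi_pseudo_metric X (dd X D)"
  unfolding quasi_pseudo_metric_def
proof (intro conjI ballI)
  fix x y z assume "x \<in> X" "y \<in> X" "z \<in> X"
  then show "dd X D x z \<le> dd X D x y + dd X D y z" by (rule dd_tri)
next
  fix x y assume "x \<in> X" "y \<in> X"
  then show "0 \<le> dd X D x y" by (rule dd_nonneg)
next
  fix x assume "x \<in> X"
  then show "dd X D x x = 0" by (rule dd_diag)
qed


lemma refineA: assumes e: "0 < e"
  shows "\<exists>r>0. \<exists>e'>0. {(x, y) \<in> X \<times> X. D r x y < ennreal e'} \<subseteq> {(x, y) \<in> X \<times> X. dd X D x y < e}"
proof -
  obtain n where n: "(1/2::real)^n < e" using real_arch_pow_inv[of e "1/2"] e by auto
  have n': "(1/2::real)^Suc n < e" using n by (rule le_less_trans[rotated]) simp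
  show ?thesis
  proof (intro exI conjI)
    show "0 < real (Suc n)" by simp
    show "0 < (1/3::real)^Suc n" by simp
    show "{(x, y) \<in> X \<times> X. D (real (Suc n)) x y < ennreal ((1/3)^Suc n)} \<subseteq> {(x, y) \<in> X \<times> X. dd X D x y < e}"
    proof -
      have "dd X D x y < e" if xy: "x \<in> X" "y \<in> X" "D (real (Suc n)) x y < ennreal ((1/3)^Suc n)" for x y
      proof -
        have "(x, y) \<in> VV X D (Suc n)" using xy by (simp add: VV_def del: of_nat_Suc)
        then have "ff X D x y \<le> (1/2)^Suc n" by (rule ff_le)
        then show "dd X D x y < e" using dd_le_ff[OF xy(1,2)] n' by linarith
      qed
      then show ?thesis by auto
    qed
  qed
qed

lemma refineB: assumes r: "0 < r" and e: "0 < e"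
  shows "\<exists>e'>0. {(x, y) \<in> X \<times> X. dd X D x y < e'} \<subseteq> {(x, y) \<in> X \<times> X. D r x y < ennreal e}"
proof -
  obtain n1 where n1: "(1/3::real)^n1 < e" using real_arch_pow_inv[of e "1/3"] e by auto
  obtain n2 where n2: "r \<le> real n2" using real_arch_simple by blast
  define k where "k = n1 + n2"
  have rk: "r \<le> real (Suc k)" using n2 by (simp add: k_def)
  have ek: "(1/3::real)^Suc k \<le> e"
  proof -
    have "(1/3::real)^Suc k \<le> (1/3)^n1" by (intro power_decreasing) (auto simp: k_def)
    then show ?thesis using n1 by simp
  qed
  show ?thesis
  proof (intro exI conjI)
    show "0 < (1/2::real)^Suc k" by simp
    show "{(x, y) \<in> X \<times> X. dd X D x y < (1/2)^Suc k} \<subseteq> {(x, y) \<in> X \<times> X. D r x y < ennreal e}"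
    proof -
      have "D r x y < ennreal e" if xy: "x \<in> X" "y \<in> X" "dd X D x y < (1/2)^Suc k" for x y
      proof -
      have "ff X D x y < (1/2)^k" using ff_le_dd[OF xy(1,2)] xy(3) by simp
      then have "(x, y) \<in> VV X D (Suc k)" by (rule ff_lt)
      then have h: "D (real (Suc k)) x y < ennreal ((1/3)^Suc k)" by (simp add: VV_def del: of_nat_Suc)
      have "D r x y \<le> D (real (Suc k)) x y" using ax_mono[OF xy(1,2) r rk] .
      also note h
      also have "ennreal ((1/3)^Suc k) \<le> ennreal e" using ek by (rule ennreal_leI)
      finally show "D r x y < ennreal e" .
      qed
      then show ?thesis by auto
    qed
  qed
qed

lemma dd_unif: "quasi_uniformity_d X (dd X D) = quasi_uniformity_dr X D"
proof
  show "quasi_uniformity_d X (dd X D) \<subseteq> quasi_uniformity_dr X D"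
  proof
    fix U assume "U \<in> quasi_uniformity_d X (dd X D)"
    then obtain e where U: "U \<subseteq> X \<times> X" "0 < e" "{(x, y) \<in> X \<times> X. dd X D x y < e} \<subseteq> U"
      unfolding quasi_uniformity_d_def by blast
    obtain r e' where "0 < r" "0 < e'"
      "{(x, y) \<in> X \<times> X. D r x y < ennreal e'} \<subseteq> {(x, y) \<in> X \<times> X. dd X D x y < e}"
      using refineA[OF U(2)] by blast
    then show "U \<in> quasi_uniformity_dr X D"
      unfolding quasi_uniformity_dr_def using U by blast
  qed
  show "quasi_uniformity_dr X D \<subseteq> quasi_uniformity_d X (dd X D)"
  proof
    fix U assume "U \<in> quasi_uniformity_dr X D"
    then obtain r e where U: "U \<subseteq> X \<times> X" "0 < r" "0 < e" "{(x, y) \<in> X \<times> X. D r x y < ennreal e} \<subseteq> U"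
      unfolding quasi_uniformity_dr_def by blast
    obtain e' where "0 < e'"
      "{(x, y) \<in> X \<times> X. dd X D x y < e'} \<subseteq> {(x, y) \<in> X \<times> X. D r x y < ennreal e}"
      using refineB[OF U(2,3)] by blast
    then show "U \<in> quasi_uniformity_d X (dd X D)"
      unfolding quasi_uniformity_d_def using U by blast
  qed
qed

lemma dd_qm: assumes nd: "dr_nondegenerate X D" shows "quasi_metric X (dd X D)"
  unfolding quasi_metric_def
proof (intro conjI dd_qpm ballI impI)
  fix x y assume xy: "x \<in> X" "y \<in> X" and d0: "dd X D x y = 0"
  have f0: "ff X D x y = 0" using ff_le_dd[OF xy] ff_nonneg[of x y] d0 by simp
  have V: "(x, y) \<in> VV X D (Suc k)" for k by (rule ff_lt) (simp add: f0)
  have "D r x y = 0" if r: "0 < r" for r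
  proof -
    obtain n2 where n2: "r \<le> real n2" using real_arch_simple by blast
    have bnd: "D r x y < ennreal ((1/3)^Suc k)" if "n2 \<le> k" for k
    proof -
      have "r \<le> real (Suc k)" using n2 that by simp
      then have "D r x y \<le> D (real (Suc k)) x y" using ax_mono[OF xy r] by blast
      also have "\<dots> < ennreal ((1/3)^Suc k)" using V[of k] by (simp add: VV_def del: of_nat_Suc)
      finally show ?thesis .
    qed
    obtain c where c: "D r x y = ennreal c" "0 \<le> c"
      using bnd[of n2] by (cases "D r x y" rule: ennreal_cases) auto
    have "c \<le> 0"
    proof (rule ccontr)
      assume "\<not> c \<le> 0"
      then obtain n1 where n1: "(1/3::real)^n1 < c" using real_arch_pow_inv[of c "1/3"] by auto
      have "(1/3::real)^Suc (n1 + n2) \<le> (1/3)^n1" by (intro power_decreasing) auto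
      moreover have "c < (1/3)^Suc (n1 + n2)" using bnd[of "n1 + n2"] c by (simp add: ennreal_less_iff del: power_Suc)
      ultimately show False using n1 by simp
    qed
    then show ?thesis using c by simp
  qed
  then show "x = y" using nd xy unfolding dr_nondegenerate_def by blast
qed

end

theorem theorem4p10:
  fixes X :: "'a set" and D :: "real \<Rightarrow> 'a \<Rightarrow> 'a \<Rightarrow> ennreal"
  assumes "weaker_dr_axioms X D"
  shows "(\<exists>d. quasi_pseudo_metric X d \<and> quasi_uniformity_d X d = quasi_uniformity_dr X D) \<and>
         (dr_nondegenerate X D \<longrightarrow>
            (\<exists>d. quasi_metric X d \<and> quasi_uniformity_d X d = quasi_uniformity_dr X D))"
  using dd_qpm[OF assms] dd_unif[OF assms] dd_qm[OF assms] by blast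

end
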